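(* Let $d_E$ be the Euclidean metric on $\mathbb R^n$, $\delta>0$, and let $w:\mathbb R^n\to\mathbb R^n$ be a contraction with respect to $d_E$ with contractivity factor $\lambda<\tfrac12$ and fixed point $x_f=\tilde o\in\mathcal D^n(\delta)$. Then the minimal absorbing set of the $\delta$-roundoff $\tilde w$ of $w$ (in $\mathcal D^n(\delta)$) is $\mathcal M[\tilde w]=\{\tilde o\}$.
   Context: For $m\in\mathbb Z^n$, $C_\delta(m)=\prod_{j=1}^n[(m_j-\tfrac12)\delta,(m_j+\tfrac12)\delta)$; $\mathcal D^n(\delta)=\{\delta m:m\in\mathbb Z^n\}\subset\mathbb R^n$. The $\delta$-roundoff of $x\in\mathbb R^n$ is $\tilde x=\delta m$ where $x\in C_\delta(m)$; the $\delta$-roundoff of $w$ is $\tilde w(\tilde x)=\widetilde{w(\tilde x)}$ on $\mathcal D^n(\delta)$. A set $\Lambda\subset\mathcal D^n(\delta)$ is absorbing for $\tilde w$ if for every $\tilde x\in\mathcal D^n(\delta)$ there is $N$ with $\tilde w^{\circ i}(\tilde x)\in\Lambda$ for all $i\ge N$; the minimal absorbing set $\mathcal M[\tilde w]$ is the intersection of all absorbing sets (which, for roundoffs of contractions, is itself absorbing). *)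

theory Defs
  imports "HOL-Analysis.Analysis"
begin

definition lattice :: "real \<Rightarrow> (real ^ 'n) set" where
  "lattice \<delta> = {x. \<forall>j. \<exists>m::int. x $ j = \<delta> * of_int m}"

text \<open>delta-roundoff of x: delta m where x lies in the half-open cube C_delta(m),
  i.e. (m_j - 1/2) delta <= x_j < (m_j + 1/2) delta, so m_j = floor (x_j/delta + 1/2).\<close>
definition roundoff :: "real \<Rightarrow> real ^ 'n \<Rightarrow> real ^ 'n" where
  "roundoff \<delta> x = (\<chi> j. \<delta> * of_int \<lfloor>x $ j / \<delta> + 1/2\<rfloor>)"

definition roundoff_map :: "real \<Rightarrow> (real ^ 'n \<Rightarrow> real ^ 'n) \<Rightarrow> real ^ 'n \<Rightarrow> real ^ 'n" where
  "roundoff_map \<delta> w = (\<lambda>x. roundoff \<delta> (w x))"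

definition absorbing :: "real \<Rightarrow> (real ^ 'n \<Rightarrow> real ^ 'n) \<Rightarrow> (real ^ 'n) set \<Rightarrow> bool" where
  "absorbing \<delta> f \<Lambda> \<longleftrightarrow> \<Lambda> \<subseteq> lattice \<delta> \<and>
     (\<forall>x\<in>lattice \<delta>. \<exists>N. \<forall>i\<ge>N. (f ^^ i) x \<in> \<Lambda>)"

definition minimal_absorbing :: "real \<Rightarrow> (real ^ 'n \<Rightarrow> real ^ 'n) \<Rightarrow> (real ^ 'n) set" where
  "minimal_absorbing \<delta> f = \<Inter>{\<Lambda>. absorbing \<delta> f \<Lambda>}"

end

theory Submission
  imports Defs
begin

lemma roundoff_in_lattice: "roundoff \<delta> y \<in> lattice \<delta>"
  unfolding roundoff_def lattice_def by auto

lemma roundoff_lattice_id: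
  assumes "\<delta> > 0" "x \<in> lattice \<delta>" shows "roundoff \<delta> x = x"
proof -
  have "\<delta> * of_int \<lfloor>x $ j / \<delta> + 1/2\<rfloor> = x $ j" for j
  proof -
    obtain m :: int where m: "x $ j = \<delta> * of_int m" using assms(2) unfolding lattice_def by blast
    have "x $ j / \<delta> + 1/2 = of_int m + 1/2" using m assms(1) by simp
    moreover have "\<lfloor>(of_int m :: real) + 1/2\<rfloor> = m" by linarith
    ultimately show ?thesis using m by simp
  qed
  then show ?thesis unfolding roundoff_def by (simp add: vec_eq_iff)
qed

lemma lattice_sep:
  assumes "\<delta> > 0" "x \<in> lattice \<delta>" "y \<in> lattice \<delta>" "x \<noteq> y"
  shows "\<delta> \<le> dist x y"
proof -
  obtain j where j: "x $ j \<noteq> y $ j" using assms(4) by (auto simp: vec_eq_iff)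
  obtain m :: int where m: "x $ j = \<delta> * of_int m" using assms(2) unfolding lattice_def by blast
  obtain k :: int where k: "y $ j = \<delta> * of_int k" using assms(3) unfolding lattice_def by blast
  have "m \<noteq> k" using j m k by auto
  hence "1 \<le> \<bar>of_int m - of_int k :: real\<bar>" by linarith
  hence "\<delta> * 1 \<le> \<delta> * \<bar>of_int m - of_int k :: real\<bar>" using assms(1) by simp
  also have "\<dots> = \<bar>\<delta> * (of_int m - of_int k)\<bar>" using assms(1) by (simp add: abs_mult)
  also have "\<dots> = \<bar>(x - y) $ j\<bar>" using m k by (simp only: vector_minus_component right_diff_distrib)
  also have "\<dots> \<le> norm (x - y)" by (rule component_le_norm_cart)
  finally show ?thesis by (simp add: dist_norm)
qed

lemma floor_half_bound: "\<bar>of_int \<lfloor>t + 1/2\<rfloor> :: real\<bar> \<le> 2 * \<bar>t\<bar>"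
proof (cases "t < -1/2")
  case True
  then show ?thesis by linarith
next
  case False
  show ?thesis
  proof (cases "t < 1/2")
    case True
    with False have "\<lfloor>t + 1/2\<rfloor> = 0" by linarith
    then show ?thesis by simp
  next
    case False
    then show ?thesis by linarith
  qed
qed

lemma roundoff_dist:
  assumes "\<delta> > 0" "xf \<in> lattice \<delta>"
  shows "dist (roundoff \<delta> y) xf \<le> 2 * dist y xf"
proof -
  have "norm ((roundoff \<delta> y - xf) $ j) \<le> norm ((2 *\<^sub>R (y - xf)) $ j)" for j
  proof -
    obtain k :: int where k: "xf $ j = \<delta> * of_int k" using assms(2) unfolding lattice_def by blast
    define t where "t = y $ j / \<delta> - of_int k"
    have yt: "y $ j / \<delta> + 1/2 = t + 1/2 + of_int k" unfolding t_def by simp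
    have fl: "\<lfloor>y $ j / \<delta> + 1/2\<rfloor> = \<lfloor>t + 1/2\<rfloor> + k" unfolding yt by linarith
    have "(roundoff \<delta> y - xf) $ j = \<delta> * of_int \<lfloor>t + 1/2\<rfloor>"
      unfolding roundoff_def using k fl by (simp add: algebra_simps)
    moreover have "y $ j - xf $ j = \<delta> * t" unfolding t_def using k assms(1) by (simp add: field_simps)
    ultimately have e1: "\<bar>(roundoff \<delta> y - xf) $ j\<bar> = \<delta> * \<bar>of_int \<lfloor>t + 1/2\<rfloor>\<bar>"
      and e2: "\<bar>(2 *\<^sub>R (y - xf)) $ j\<bar> = 2 * \<delta> * \<bar>t\<bar>"
      using assms(1) by (simp_all add: abs_mult)
    have "\<delta> * \<bar>of_int \<lfloor>t + 1/2\<rfloor> :: real\<bar> \<le> \<delta> * (2 * \<bar>t\<bar>)"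
      using floor_half_bound[of t] assms(1) by (intro mult_left_mono) auto
    then show ?thesis using e1 e2 by simp
  qed
  then have "norm (roundoff \<delta> y - xf) \<le> norm (2 *\<^sub>R (y - xf))"
    by (rule norm_le_componentwise_cart)
  then show ?thesis by (simp add: dist_norm)
qed

theorem theorem6:
  fixes w :: "real ^ 'n \<Rightarrow> real ^ 'n" and \<delta> c :: real and xf :: "real ^ 'n"
  assumes "\<delta> > 0"
    and "0 \<le> c" and "c < 1/2"
    and "\<And>x y. dist (w x) (w y) \<le> c * dist x y"
    and "w xf = xf" and "xf \<in> lattice \<delta>"
  shows "minimal_absorbing \<delta> (roundoff_map \<delta> w) = {xf}"
proof -
  let ?f = "roundoff_map \<delta> w"
  have fix1: "?f xf = xf" using assms roundoff_lattice_id unfolding roundoff_map_def by simp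
  have fixi: "(?f ^^ i) xf = xf" for i by (induction i) (simp_all add: fix1)
  have step: "dist (?f x) xf \<le> (2*c) * dist x xf" for x :: "real^'n"
  proof -
    have "dist (?f x) xf \<le> 2 * dist (w x) xf"
      unfolding roundoff_map_def using roundoff_dist[OF assms(1) assms(6)] by simp
    also have "\<dots> \<le> 2 * (c * dist x xf)" using assms(4)[of x xf] assms(5) by simp
    finally show ?thesis by simp
  qed
  have iter: "dist ((?f ^^ i) x) xf \<le> (2*c)^i * dist x xf" for i and x :: "real^'n"
  proof (induction i)
    case 0 then show ?case by simp
  next
    case (Suc i)
    have "dist ((?f ^^ Suc i) x) xf \<le> (2*c) * dist ((?f ^^ i) x) xf" using step by simp
    also have "\<dots> \<le> (2*c) * ((2*c)^i * dist x xf)" using Suc assms(2) by (intro mult_left_mono) auto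
    finally show ?case by (simp add: mult.assoc)
  qed
  have inlat: "x \<in> lattice \<delta> \<Longrightarrow> (?f ^^ i) x \<in> lattice \<delta>" for x :: "real^'n" and i
    by (cases i) (simp_all add: roundoff_map_def roundoff_in_lattice)
  have abs1: "absorbing \<delta> ?f {xf}"
    unfolding absorbing_def
  proof (intro conjI ballI)
    show "{xf} \<subseteq> lattice \<delta>" using assms(6) by simp
    fix x :: "real^'n" assume x: "x \<in> lattice \<delta>"
    show "\<exists>N. \<forall>i\<ge>N. (?f ^^ i) x \<in> {xf}"
    proof (cases "dist x xf = 0")
      case True
      then show ?thesis using fixi by auto
    next
      case False
      hence dpos: "dist x xf > 0" by simp
      obtain N where N: "(2*c)^N < \<delta> / dist x xf"
        using real_arch_pow_inv[of "\<delta> / dist x xf" "2*c"] assms dpos by auto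
      show ?thesis
      proof (intro exI allI impI)
        fix i assume "N \<le> i"
        hence "(2*c)^i \<le> (2*c)^N" using assms(2,3) by (intro power_decreasing) auto
        hence "(2*c)^i * dist x xf < \<delta>"
          using N dpos by (smt (verit) mult_right_mono pos_less_divide_eq)
        hence "dist ((?f ^^ i) x) xf < \<delta>" using iter[of i x] by simp
        then show "(?f ^^ i) x \<in> {xf}"
          using lattice_sep[OF assms(1) inlat[OF x] assms(6)] by force
      qed
    qed
  qed
  have sub: "xf \<in> L" if aL: "absorbing \<delta> ?f L" for L
  proof -
    obtain N where "\<forall>i\<ge>N. (?f ^^ i) xf \<in> L" using aL assms(6) unfolding absorbing_def by blast
    then show ?thesis using fixi by auto
  qed
  show ?thesis unfolding minimal_absorbing_def
    using abs1 sub by blast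
qed

end
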